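(* Let $\varepsilon>0$, let $V$ be a probability space, and let $f\colon V\times V\to[0,\infty)$ be a measurable symmetric function. Then there exists a measurable partition $\mathcal P$ of $V$ into at most $2^{32\,\mathbb E f/\varepsilon^2}$ parts such that $$\big\|(f-f_{\mathcal P})\,1_{f_{\mathcal P}\le 1}\big\|_\square\le\varepsilon.$$
   Context: Symmetric means $f(x,y)=f(y,x)$; $\mathbb E f=\mathbb E_{x,y\in V}f(x,y)$ with $x,y$ independent according to the probability measure $\mu$ of $V$. For a partition $\mathcal P$ of $V$, $f_{\mathcal P}$ is defined by $f_{\mathcal P}(x,y)=\frac{1}{\mu(A)\mu(B)}\int_{A\times B}f$ for $(x,y)\in A\times B$, where $A,B$ are parts of $\mathcal P$ (zero-measure parts are ignored). $(f-f_{\mathcal P})1_{f_{\mathcal P}\le1}$ denotes the function equal to $f(x,y)-f_{\mathcal P}(x,y)$ where $f_{\mathcal P}(x,y)\le1$ and $0$ elsewhere. For $h\colon V_1\times V_2\to\mathbb R$ on probability spaces $V_1,V_2$, the cut norm is $\|h\|_\square=\sup_{A\subseteq V_1,B\subseteq V_2}\left|\mathbb E_{x\in V_1,y\in V_2}h(x,y)1_A(x)1_B(y)\right|$, over measurable $A,B$. *)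

theory Defs
  imports "HOL-Probability.Probability"
begin

definition meas_partition :: "'a measure \<Rightarrow> 'a set set \<Rightarrow> bool" where
  "meas_partition M P \<longleftrightarrow> finite P \<and> P \<subseteq> sets M \<and> \<Union>P = space M \<and> {} \<notin> P
     \<and> (\<forall>A\<in>P. \<forall>B\<in>P. A \<noteq> B \<longrightarrow> A \<inter> B = {})"

definition part_of :: "'a set set \<Rightarrow> 'a \<Rightarrow> 'a set" where
  "part_of P x = (THE A. A \<in> P \<and> x \<in> A)"

definition expect2 :: "'a measure \<Rightarrow> ('a \<times> 'a \<Rightarrow> real) \<Rightarrow> ennreal" where
  "expect2 M f = (\<integral>\<^sup>+ z. ennreal (f z) \<partial>(M \<Otimes>\<^sub>M M))"

text \<open>The step function f_P (with values in [0,\<infinity>]); parts of measure zero are ignored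
  (value 0 there).\<close>
definition step_fun :: "'a measure \<Rightarrow> 'a set set \<Rightarrow> ('a \<times> 'a \<Rightarrow> real) \<Rightarrow> 'a \<times> 'a \<Rightarrow> ennreal" where
  "step_fun M P f z = (let A = part_of P (fst z); B = part_of P (snd z) in
     if emeasure M A = 0 \<or> emeasure M B = 0 then 0
     else (\<integral>\<^sup>+ w. ennreal (f w) * indicator (A \<times> B) w \<partial>(M \<Otimes>\<^sub>M M)) / (emeasure M A * emeasure M B))"

definition trunc_err :: "'a measure \<Rightarrow> 'a set set \<Rightarrow> ('a \<times> 'a \<Rightarrow> real) \<Rightarrow> 'a \<times> 'a \<Rightarrow> real" where
  "trunc_err M P f z = (if step_fun M P f z \<le> 1 then f z - enn2real (step_fun M P f z) else 0)"

definition cut_norm :: "'a measure \<Rightarrow> ('a \<times> 'a \<Rightarrow> real) \<Rightarrow> real" where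
  "cut_norm M h = (SUP AB \<in> sets M \<times> sets M.
     \<bar>\<integral> z. h z * indicator (fst AB) (fst z) * indicator (snd AB) (snd z) \<partial>(M \<Otimes>\<^sub>M M)\<bar>)"

end

theory Submission
  imports Defs
begin


definition rect :: "'a set \<times> 'a set \<Rightarrow> ('a \<times> 'a) set" where
  "rect AB = fst AB \<times> snd AB"

definition rc :: "'a set set \<Rightarrow> ('a \<times> 'a \<Rightarrow> real) \<Rightarrow> bool" where
  "rc P g \<longleftrightarrow> (\<forall>A\<in>P. \<forall>B\<in>P. \<forall>z\<in>A\<times>B. \<forall>w\<in>A\<times>B. g z = g w)"

definition refines :: "'a set set \<Rightarrow> 'a set set \<Rightarrow> bool" where
  "refines Q P \<longleftrightarrow> (\<forall>A\<in>Q. \<exists>B\<in>P. A \<subseteq> B)"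

definition cst :: "('a \<times> 'a \<Rightarrow> real) \<Rightarrow> 'a set \<times> 'a set \<Rightarrow> real" where
  "cst g AB = g (SOME z. z \<in> rect AB)"

lemma part_of_eq:
  assumes "meas_partition M P" "A \<in> P" "x \<in> A"
  shows "part_of P x = A"
  unfolding part_of_def
proof (rule the_equality)
  show "A \<in> P \<and> x \<in> A" using assms by auto
  fix B assume "B \<in> P \<and> x \<in> B"
  then show "B = A" using assms unfolding meas_partition_def by blast
qed

lemma part_of_in:
  assumes "meas_partition M P" "x \<in> space M"
  shows "part_of P x \<in> P \<and> x \<in> part_of P x"
proof -
  obtain A where "A \<in> P" "x \<in> A" using assms unfolding meas_partition_def by blast
  then show ?thesis using part_of_eq[OF assms(1)] by simp
qed

lemma sum_rect_indicator:
  assumes "meas_partition M P" "z \<in> space M \<times> space M"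
  shows "(\<Sum>AB\<in>P\<times>P. indicator (rect AB) z) = (1::real)"
proof -
  obtain x y where z: "z = (x,y)" "x \<in> space M" "y \<in> space M" using assms by auto
  have s: "(\<Sum>A\<in>P. indicator A u) = (1::real)" if "u \<in> space M" for u
  proof -
    have "(\<Sum>A\<in>P. 1 * indicator (id A) u) = (1::real)"
      using part_of_in[OF assms(1) that] assms(1)
      by (intro sum_indicator_disjoint_family) (auto simp: disjoint_family_on_def meas_partition_def)
    then show ?thesis by simp
  qed
  have "(\<Sum>AB\<in>P\<times>P. indicator (rect AB) z) = (\<Sum>(A,B)\<in>P\<times>P. indicator A x * (indicator B y::real))"
    unfolding rect_def z
    by (intro sum.cong) (auto simp: indicator_def)
  also have "\<dots> = (\<Sum>A\<in>P. \<Sum>B\<in>P. indicator A x * (indicator B y::real))"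
    by (rule sum.cartesian_product[symmetric])
  also have "\<dots> = (\<Sum>A\<in>P. indicator A x) * (\<Sum>B\<in>P. indicator B y)"
    by (simp add: sum_product)
  finally show ?thesis using s z by simp
qed

lemma rc_decomp:
  assumes "meas_partition M P" "rc P g" "z \<in> space M \<times> space M"
  shows "g z = (\<Sum>AB\<in>P\<times>P. cst g AB * indicator (rect AB) z)"
proof -
  have "g z = (\<Sum>AB\<in>P\<times>P. indicator (rect AB) z) * g z"
    using sum_rect_indicator[OF assms(1,3)] by simp
  also have "\<dots> = (\<Sum>AB\<in>P\<times>P. cst g AB * indicator (rect AB) z)"
    unfolding sum_distrib_right
  proof (intro sum.cong refl)
    fix AB assume AB: "AB \<in> P \<times> P"
    show "indicator (rect AB) z * g z = cst g AB * indicator (rect AB) z"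
    proof (cases "z \<in> rect AB")
      case True
      then have ex: "\<exists>w. w \<in> rect AB" by blast
      obtain A B where AB': "AB = (A,B)" "A \<in> P" "B \<in> P" using AB by auto
      have w: "(SOME w. w \<in> rect AB) \<in> A \<times> B" using someI_ex[OF ex] AB' by (simp add: rect_def)
      have rr: "\<forall>z\<in>A\<times>B. \<forall>w\<in>A\<times>B. g z = g w" using assms(2) AB'(2,3) unfolding rc_def by blast
      have zz: "z \<in> A \<times> B" using True AB'(1) by (simp add: rect_def)
      have "g z = cst g AB" unfolding cst_def
        using bspec[OF bspec[OF rr zz] w] .
      then show ?thesis using True by simp
    qed simp
  qed
  finally show ?thesis .
qed


definition avg :: "'a measure \<Rightarrow> ('a \<times> 'a \<Rightarrow> real) \<Rightarrow> 'a set \<Rightarrow> 'a set \<Rightarrow> real" where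
  "avg M f A B = (if measure M A = 0 \<or> measure M B = 0 then 0
     else (\<integral>w. f w * indicator (A \<times> B) w \<partial>(M \<Otimes>\<^sub>M M)) / (measure M A * measure M B))"

definition Fr :: "'a measure \<Rightarrow> 'a set set \<Rightarrow> ('a \<times> 'a \<Rightarrow> real) \<Rightarrow> 'a \<times> 'a \<Rightarrow> real" where
  "Fr M P f z = avg M f (part_of P (fst z)) (part_of P (snd z))"

lemma rcD: assumes "rc P g" "A \<in> P" "B \<in> P" "z \<in> A \<times> B" "w \<in> A \<times> B"
  shows "g z = g w"
  using assms unfolding rc_def by blast

lemma rc_comp: assumes "rc P g" shows "rc P (\<lambda>z. h (g z))"
  unfolding rc_def
proof (intro ballI)
  fix A B z w assume "A \<in> P" "B \<in> P" "z \<in> A \<times> B" "w \<in> A \<times> B"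
  then have "g z = g w" using assms unfolding rc_def by blast
  then show "h (g z) = h (g w)" by (rule arg_cong)
qed

lemma rc_mult: assumes "rc P g" "rc P h" shows "rc P (\<lambda>z. g z * h z)"
  unfolding rc_def
proof (intro ballI)
  fix A B z w assume "A \<in> P" "B \<in> P" "z \<in> A \<times> B" "w \<in> A \<times> B"
  then have "g z = g w" "h z = h w" using rcD[OF assms(1)] rcD[OF assms(2)] by metis+
  then show "g z * h z = g w * h w" by simp
qed

lemma rc_refines: "refines Q P \<Longrightarrow> rc P g \<Longrightarrow> rc Q g"
proof -
  assume r: "refines Q P" and g: "rc P g"
  show "rc Q g" unfolding rc_def
  proof (intro ballI)
    fix A B z w assume "A \<in> Q" "B \<in> Q" "z \<in> A \<times> B" "w \<in> A \<times> B"
    moreover obtain A' B' where "A' \<in> P" "B' \<in> P" "A \<subseteq> A'" "B \<subseteq> B'"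
      using r \<open>A \<in> Q\<close> \<open>B \<in> Q\<close> unfolding refines_def by meson
    ultimately have "A' \<in> P" "B' \<in> P" "z \<in> A' \<times> B'" "w \<in> A' \<times> B'" by auto
    then show "g z = g w" by (rule rcD[OF g])
  qed
qed

lemma rc_Fr: assumes "meas_partition M P" shows "rc P (Fr M P f)"
  unfolding rc_def Fr_def
proof (intro ballI)
  fix A B z w assume "A \<in> P" "B \<in> P" "z \<in> A \<times> B" "w \<in> A \<times> B"
  then show "avg M f (part_of P (fst z)) (part_of P (snd z)) = avg M f (part_of P (fst w)) (part_of P (snd w))"
    using part_of_eq[OF assms] by (simp add: mem_Times_iff)
qed

locale reg = prob_space M for M :: "'a measure" +
  fixes f :: "'a \<times> 'a \<Rightarrow> real"
  assumes fint: "integrable (M \<Otimes>\<^sub>M M) f"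
  and fnn: "\<And>z. z \<in> space (M \<Otimes>\<^sub>M M) \<Longrightarrow> 0 \<le> f z"

sublocale reg \<subseteq> N: prob_space "M \<Otimes>\<^sub>M M"
  by (rule prob_space_pair) (rule prob_space_axioms)+

context reg
begin

abbreviation "N \<equiv> M \<Otimes>\<^sub>M M"

lemma spaceN: "space N = space M \<times> space M"
  by (simp add: space_pair_measure)

lemma rect_sets: "meas_partition M P \<Longrightarrow> AB \<in> P \<times> P \<Longrightarrow> rect AB \<in> sets N"
  unfolding meas_partition_def rect_def by (auto intro!: pair_measureI)

lemma measure_rect: "A \<in> sets M \<Longrightarrow> B \<in> sets M \<Longrightarrow> measure N (A \<times> B) = measure M A * measure M B"
proof -
  assume A: "A \<in> sets M" and B: "B \<in> sets M"
  have "emeasure N (A \<times> B) = emeasure M A * emeasure M B"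
    using A B by (rule emeasure_pair_measure_Times)
  then have "ennreal (measure N (A \<times> B)) = ennreal (measure M A * measure M B)"
    by (simp add: N.emeasure_eq_measure emeasure_eq_measure ennreal_mult)
  then show ?thesis by simp
qed

lemma rc_integrable:
  assumes P: "meas_partition M P" and g: "rc P g"
  shows "integrable N g"
proof -
  have "integrable N (\<lambda>z. \<Sum>AB\<in>P\<times>P. cst g AB * indicator (rect AB) z)"
  proof (rule Bochner_Integration.integrable_sum)
    fix AB assume "AB \<in> P \<times> P"
    then show "integrable N (\<lambda>z. cst g AB * indicator (rect AB) z)"
      using rect_sets[OF P] by (intro integrable_real_mult_indicator N.integrable_const) auto
  qed
  moreover have "integrable N (\<lambda>z. \<Sum>AB\<in>P\<times>P. cst g AB * indicator (rect AB) z) = integrable N g"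
  proof (rule Bochner_Integration.integrable_cong[OF refl])
    fix z assume "z \<in> space N"
    then show "(\<Sum>AB\<in>P\<times>P. cst g AB * indicator (rect AB) z) = g z"
      using rc_decomp[OF P g] by (simp add: spaceN)
  qed
  ultimately show ?thesis by simp
qed

lemma rc_mult_integrable:
  assumes P: "meas_partition M P" and g: "rc P g" and h: "integrable N h"
  shows "integrable N (\<lambda>z. g z * h z)"
proof -
  have "integrable N (\<lambda>z. \<Sum>AB\<in>P\<times>P. cst g AB * (h z * indicator (rect AB) z))"
  proof (rule Bochner_Integration.integrable_sum)
    fix AB assume "AB \<in> P \<times> P"
    then have "integrable N (\<lambda>z. h z * indicator (rect AB) z)"
      using rect_sets[OF P] h by (intro integrable_real_mult_indicator) auto
    then show "integrable N (\<lambda>z. cst g AB * (h z * indicator (rect AB) z))" by simp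
  qed
  moreover have "integrable N (\<lambda>z. \<Sum>AB\<in>P\<times>P. cst g AB * (h z * indicator (rect AB) z)) = integrable N (\<lambda>z. g z * h z)"
  proof (rule Bochner_Integration.integrable_cong[OF refl])
    fix z assume "z \<in> space N"
    then have "g z = (\<Sum>AB\<in>P\<times>P. cst g AB * indicator (rect AB) z)"
      using rc_decomp[OF P g] by (simp add: spaceN)
    then show "(\<Sum>AB\<in>P\<times>P. cst g AB * (h z * indicator (rect AB) z)) = g z * h z"
      by (simp add: sum_distrib_right sum_distrib_left mult_ac)
  qed
  ultimately show ?thesis by simp
qed

lemma rc_integral:
  assumes P: "meas_partition M P" and g: "rc P g" and h: "integrable N h"
  shows "(\<integral>z. g z * h z \<partial>N) = (\<Sum>AB\<in>P\<times>P. cst g AB * (\<integral>z. h z * indicator (rect AB) z \<partial>N))"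
proof -
  have "(\<integral>z. g z * h z \<partial>N) = (\<integral>z. (\<Sum>AB\<in>P\<times>P. cst g AB * (h z * indicator (rect AB) z)) \<partial>N)"
  proof (rule Bochner_Integration.integral_cong[OF refl])
    fix z assume "z \<in> space N"
    then have "g z = (\<Sum>AB\<in>P\<times>P. cst g AB * indicator (rect AB) z)"
      using rc_decomp[OF P g] by (simp add: spaceN)
    then show "g z * h z = (\<Sum>AB\<in>P\<times>P. cst g AB * (h z * indicator (rect AB) z))"
      by (simp add: sum_distrib_right sum_distrib_left mult_ac)
  qed
  also have "\<dots> = (\<Sum>AB\<in>P\<times>P. (\<integral>z. cst g AB * (h z * indicator (rect AB) z) \<partial>N))"
  proof (rule Bochner_Integration.integral_sum)
    fix AB assume "AB \<in> P \<times> P"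
    then have "integrable N (\<lambda>z. h z * indicator (rect AB) z)"
      using rect_sets[OF P] h by (intro integrable_real_mult_indicator) auto
    then show "integrable N (\<lambda>z. cst g AB * (h z * indicator (rect AB) z))" by simp
  qed
  also have "\<dots> = (\<Sum>AB\<in>P\<times>P. cst g AB * (\<integral>z. h z * indicator (rect AB) z \<partial>N))"
    by simp
  finally show ?thesis .
qed

lemma avg_nonneg: "0 \<le> avg M f A B"
  unfolding avg_def using fnn
  by (auto intro!: divide_nonneg_nonneg integral_nonneg simp: indicator_def)

lemma Fr_nonneg: "0 \<le> Fr M P f z"
  unfolding Fr_def by (rule avg_nonneg)

lemma rect_Fr:
  assumes P: "meas_partition M P" and A: "A \<in> P" and B: "B \<in> P"
  shows "(\<integral>z. Fr M P f z * indicator (A \<times> B) z \<partial>N) = (\<integral>z. f z * indicator (A \<times> B) z \<partial>N)"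
proof -
  have As: "A \<in> sets M" and Bs: "B \<in> sets M" using P A B unfolding meas_partition_def by auto
  have "(\<integral>z. Fr M P f z * indicator (A \<times> B) z \<partial>N) = (\<integral>z. avg M f A B * indicator (A \<times> B) z \<partial>N)"
  proof (intro Bochner_Integration.integral_cong refl)
    fix z show "Fr M P f z * indicator (A \<times> B) z = avg M f A B * indicator (A \<times> B) z"
      using part_of_eq[OF P A] part_of_eq[OF P B] by (cases "z \<in> A \<times> B") (auto simp: Fr_def)
  qed
  also have "\<dots> = avg M f A B * (measure M A * measure M B)"
    using As Bs by (simp add: measure_rect)
  also have "\<dots> = (\<integral>z. f z * indicator (A \<times> B) z \<partial>N)"
  proof (cases "measure M A = 0 \<or> measure M B = 0")
    case True
    then have "A \<times> B \<in> null_sets N"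
      using As Bs by (intro null_setsI) (auto simp: N.emeasure_eq_measure measure_rect)
    then have "AE z in N. z \<notin> A \<times> B" by (rule AE_not_in)
    then have "(\<integral>z. f z * indicator (A \<times> B) z \<partial>N) = (\<integral>z. 0 \<partial>N)"
      using fint As Bs by (intro integral_cong_AE) (auto simp: borel_measurable_integrable)
    then show ?thesis using True by (simp add: avg_def)
  next
    case False
    then show ?thesis by (simp add: avg_def)
  qed
  finally show ?thesis .
qed

lemma CE:
  assumes P: "meas_partition M P" and g: "rc P g"
  shows "(\<integral>z. g z * Fr M P f z \<partial>N) = (\<integral>z. g z * f z \<partial>N)"
proof -
  have FI: "integrable N (Fr M P f)" by (rule rc_integrable[OF P rc_Fr[OF P]])
  show ?thesis
    unfolding rc_integral[OF P g FI] rc_integral[OF P g fint]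
    using rect_Fr[OF P] by (intro sum.cong refl) (auto simp: rect_def)
qed

end



definition psi :: "real \<Rightarrow> real" where "psi t = (if t \<le> 2 then t\<^sup>2 else 4 * t - 4)"
definition dpsi :: "real \<Rightarrow> real" where "dpsi t = (if t \<le> 2 then 2 * t else 4)"

lemma D_bound:
  fixes x y e G :: real
  assumes "0 \<le> x" "0 \<le> y" "0 < e" "e \<le> 1" "\<bar>G\<bar> \<le> 1" "x \<le> 1 \<or> G = 0"
  shows "psi y - psi x - dpsi x * (y - x) \<ge> e * G * (y - x) - e\<^sup>2 / 4"
proof (cases "x \<le> 1")
  case True
  have xp: "x \<le> 2" using True by simp
  have g: "e * G * (y - x) \<le> e * \<bar>y - x\<bar>"
  proof -
    have "G * (y - x) \<le> \<bar>G * (y - x)\<bar>" by simp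
    also have "\<dots> \<le> \<bar>y - x\<bar>" using assms(5) by (simp add: abs_mult mult_left_le_one_le)
    finally show ?thesis using assms(3) by (simp add: mult.assoc)
  qed
  show ?thesis
  proof (cases "y \<le> 2")
    case True
    have "psi y - psi x - dpsi x * (y - x) = (y - x)\<^sup>2" using True xp
      by (simp add: psi_def dpsi_def power2_eq_square algebra_simps)
    moreover have "(\<bar>y - x\<bar> - e / 2)\<^sup>2 \<ge> 0" by simp
    then have "(y - x)\<^sup>2 \<ge> e * \<bar>y - x\<bar> - e\<^sup>2 / 4"
      by (simp add: power2_eq_square algebra_simps)
    ultimately show ?thesis using g by linarith
  next
    case False
    have "psi y - psi x - dpsi x * (y - x) = 4 * y - 4 + x\<^sup>2 - 2 * x * y" using False xp
      by (simp add: psi_def dpsi_def power2_eq_square algebra_simps)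
    moreover have "(y - 2) * (3 - 2 * x) \<ge> 0" "(1 - x) * (2 - x) \<ge> 0"
      using False \<open>x \<le> 1\<close> by (auto intro!: mult_nonneg_nonneg)
    then have "4 * y - 4 + x\<^sup>2 - 2 * x * y \<ge> y - x"
      by (simp add: power2_eq_square algebra_simps)
    moreover have "e * (y - x) \<le> y - x" using False \<open>x \<le> 1\<close> assms(4) by (simp add: mult_left_le_one_le)
    moreover have "\<bar>y - x\<bar> = y - x" using False \<open>x \<le> 1\<close> by simp
    moreover have "e\<^sup>2 \<ge> 0" by simp
    ultimately show ?thesis using g by linarith
  qed
next
  case False
  then have G: "G = 0" using assms(6) by simp
  have "psi y - psi x - dpsi x * (y - x) \<ge> 0"
  proof (cases "x \<le> 2")
    case xle: True
    show ?thesis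
    proof (cases "y \<le> 2")
      case True
      have "(y - x)\<^sup>2 \<ge> 0" by simp
      then show ?thesis using True xle by (simp add: psi_def dpsi_def power2_eq_square algebra_simps)
    next
      case yg: False
      have "(2 - x) * (2 * y - x - 2) \<ge> 0" using xle yg False by (auto intro!: mult_nonneg_nonneg)
      then show ?thesis using yg xle by (simp add: psi_def dpsi_def power2_eq_square algebra_simps)
    qed
  next
    case xg: False
    show ?thesis
    proof (cases "y \<le> 2")
      case True
      have "(y - 2)\<^sup>2 \<ge> 0" by simp
      then show ?thesis using True xg by (simp add: psi_def dpsi_def power2_eq_square algebra_simps)
    next
      case False
      then show ?thesis using xg by (simp add: psi_def dpsi_def)
    qed
  qed
  moreover have "e\<^sup>2 / 4 \<ge> 0" by simp
  moreover have "e * G * (y - x) = 0" using G by simp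
  ultimately show ?thesis by linarith
qed

lemma psi_le: "0 \<le> t \<Longrightarrow> psi t \<le> 4 * t"
  by (auto simp: psi_def power2_eq_square intro: mult_right_mono[of t 4 t, simplified])

lemma psi_nonneg: "0 \<le> t \<Longrightarrow> 0 \<le> psi t"
  by (auto simp: psi_def)



definition refine1 :: "'a set set \<Rightarrow> 'a set \<Rightarrow> 'a set set" where
  "refine1 P S = ((\<lambda>A. A \<inter> S) ` P \<union> (\<lambda>A. A - S) ` P) - {{}}"

lemma refine1_part:
  assumes P: "meas_partition M P" and S: "S \<in> sets M"
  shows "meas_partition M (refine1 P S)"
proof -
  have fin: "finite P" and sub: "P \<subseteq> sets M" and un: "\<Union>P = space M" and ne: "{} \<notin> P"
    and dis: "\<forall>A\<in>P. \<forall>B\<in>P. A \<noteq> B \<longrightarrow> A \<inter> B = {}"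
    using P unfolding meas_partition_def by auto
  have "finite (refine1 P S)" using fin unfolding refine1_def by auto
  moreover have "refine1 P S \<subseteq> sets M" using sub S unfolding refine1_def by auto
  moreover have "\<Union>(refine1 P S) = space M"
  proof
    show "\<Union>(refine1 P S) \<subseteq> space M" using un unfolding refine1_def by auto
    show "space M \<subseteq> \<Union>(refine1 P S)"
    proof
      fix x assume "x \<in> space M"
      then obtain A where A: "A \<in> P" "x \<in> A" using un by auto
      show "x \<in> \<Union>(refine1 P S)"
      proof (cases "x \<in> S")
        case True
        then have "A \<inter> S \<in> refine1 P S" using A unfolding refine1_def by auto
        then show ?thesis using A True by blast
      next
        case False
        then have "A - S \<in> refine1 P S" using A unfolding refine1_def by auto
        then show ?thesis using A False by blast
      qed
    qed
  qed
  moreover have "{} \<notin> refine1 P S" unfolding refine1_def by auto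
  moreover have "\<forall>A\<in>refine1 P S. \<forall>B\<in>refine1 P S. A \<noteq> B \<longrightarrow> A \<inter> B = {}"
  proof (intro ballI impI)
    fix A B assume A: "A \<in> refine1 P S" and B: "B \<in> refine1 P S" and AB: "A \<noteq> B"
    obtain A0 where A0: "A0 \<in> P" "A = A0 \<inter> S \<or> A = A0 - S" using A unfolding refine1_def by auto
    obtain B0 where B0: "B0 \<in> P" "B = B0 \<inter> S \<or> B = B0 - S" using B unfolding refine1_def by auto
    show "A \<inter> B = {}"
    proof (cases "A0 = B0")
      case True
      then show ?thesis using A0 B0 AB by auto
    next
      case False
      then have "A0 \<inter> B0 = {}" using dis A0 B0 by auto
      then show ?thesis using A0 B0 by auto
    qed
  qed
  ultimately show ?thesis unfolding meas_partition_def by blast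
qed

lemma refine1_card:
  assumes "finite P" shows "card (refine1 P S) \<le> 2 * card P"
proof -
  have "card (refine1 P S) \<le> card ((\<lambda>A. A \<inter> S) ` P \<union> (\<lambda>A. A - S) ` P)"
    unfolding refine1_def using assms by (intro card_mono) auto
  also have "\<dots> \<le> card ((\<lambda>A. A \<inter> S) ` P) + card ((\<lambda>A. A - S) ` P)" by (rule card_Un_le)
  also have "\<dots> \<le> card P + card P" by (intro add_mono card_image_le assms)
  finally show ?thesis by simp
qed

lemma refine1_refines: "refines (refine1 P S) P"
  unfolding refines_def
proof
  fix A assume "A \<in> refine1 P S"
  then obtain A0 where "A0 \<in> P" "A = A0 \<inter> S \<or> A = A0 - S" unfolding refine1_def by blast
  then show "\<exists>B\<in>P. A \<subseteq> B" by blast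
qed

lemma refine1_split: "A \<in> refine1 P S \<Longrightarrow> A \<subseteq> S \<or> A \<inter> S = {}"
proof -
  assume "A \<in> refine1 P S"
  then obtain A0 where "A0 \<in> P" "A = A0 \<inter> S \<or> A = A0 - S" unfolding refine1_def by blast
  then show ?thesis by blast
qed

lemma refines_trans: "refines R Q \<Longrightarrow> refines Q P \<Longrightarrow> refines R P"
  unfolding refines_def by (meson order_trans)

lemma refines_split: "refines Q P \<Longrightarrow> \<forall>A\<in>P. A \<subseteq> S \<or> A \<inter> S = {} \<Longrightarrow> \<forall>A\<in>Q. A \<subseteq> S \<or> A \<inter> S = {}"
proof -
  assume r: "refines Q P" and p: "\<forall>A\<in>P. A \<subseteq> S \<or> A \<inter> S = {}"
  show ?thesis
  proof
    fix A assume "A \<in> Q"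
    then obtain B where "B \<in> P" "A \<subseteq> B" using r unfolding refines_def by blast
    then show "A \<subseteq> S \<or> A \<inter> S = {}" using p by blast
  qed
qed

lemma rc_rect:
  assumes "\<forall>A\<in>Q. A \<subseteq> S \<or> A \<inter> S = {}" "\<forall>A\<in>Q. A \<subseteq> T \<or> A \<inter> T = {}"
  shows "rc Q (indicator (S \<times> T))"
  unfolding rc_def
proof (intro ballI)
  fix A B z w assume AB: "A \<in> Q" "B \<in> Q" and z: "z \<in> A \<times> B" and w: "w \<in> A \<times> B"
  have s: "fst z \<in> S \<longleftrightarrow> fst w \<in> S" using assms(1) AB z w by (auto simp: mem_Times_iff)
  have t: "snd z \<in> T \<longleftrightarrow> snd w \<in> T" using assms(2) AB z w by (auto simp: mem_Times_iff)
  show "indicator (S \<times> T) z = (indicator (S \<times> T) w :: real)"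
    using s t by (simp add: indicator_def mem_Times_iff)
qed



definition Phi :: "'a measure \<Rightarrow> ('a \<times> 'a \<Rightarrow> real) \<Rightarrow> 'a set set \<Rightarrow> real" where
  "Phi M f P = (\<integral>z. psi (Fr M P f z) \<partial>(M \<Otimes>\<^sub>M M))"

context reg
begin

lemma step_eq: "step_fun M P f z = ennreal (Fr M P f z)"
proof -
  define A where "A = part_of P (fst z)"
  define B where "B = part_of P (snd z)"
  have eA: "emeasure M A = ennreal (measure M A)" and eB: "emeasure M B = ennreal (measure M B)"
    by (simp_all add: emeasure_eq_measure)
  show ?thesis
  proof (cases "measure M A = 0 \<or> measure M B = 0")
    case True
    then show ?thesis unfolding step_fun_def Fr_def avg_def Let_def A_def[symmetric] B_def[symmetric]
      using eA eB by auto
  next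
    case False
    then have As: "A \<in> sets M" and Bs: "B \<in> sets M" using measure_notin_sets by blast+
    have pos: "measure M A > 0" "measure M B > 0" using False by (simp_all add: zero_less_measure_iff)
    have ABs: "A \<times> B \<in> sets N" using As Bs by simp
    have int: "integrable N (\<lambda>w. f w * indicator (A \<times> B) w)"
      using ABs fint by (rule integrable_real_mult_indicator)
    have "(\<integral>\<^sup>+ w. ennreal (f w) * indicator (A \<times> B) w \<partial>N) = (\<integral>\<^sup>+ w. ennreal (f w * indicator (A \<times> B) w) \<partial>N)"
      by (intro nn_integral_cong) (auto simp: indicator_def)
    also have "\<dots> = ennreal (\<integral>w. f w * indicator (A \<times> B) w \<partial>N)"
      using int fnn by (intro nn_integral_eq_integral) (auto simp: indicator_def)
    finally have I: "(\<integral>\<^sup>+ w. ennreal (f w) * indicator (A \<times> B) w \<partial>N) = ennreal (\<integral>w. f w * indicator (A \<times> B) w \<partial>N)" .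
    have Inn: "0 \<le> (\<integral>w. f w * indicator (A \<times> B) w \<partial>N)"
      using fnn by (intro Bochner_Integration.integral_nonneg) (auto simp: indicator_def)
    have "step_fun M P f z = ennreal (\<integral>w. f w * indicator (A \<times> B) w \<partial>N) / (ennreal (measure M A) * ennreal (measure M B))"
      unfolding step_fun_def Let_def A_def[symmetric] B_def[symmetric] using False eA eB I by simp
    also have "\<dots> = ennreal ((\<integral>w. f w * indicator (A \<times> B) w \<partial>N) / (measure M A * measure M B))"
      using pos Inn by (simp add: ennreal_mult[symmetric] divide_ennreal)
    also have "\<dots> = ennreal (Fr M P f z)"
      unfolding Fr_def avg_def A_def[symmetric] B_def[symmetric] using False by simp
    finally show ?thesis .
  qed
qed

lemma trunc_eq: "trunc_err M P f z = (if Fr M P f z \<le> 1 then f z - Fr M P f z else 0)"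
  unfolding trunc_err_def step_eq using Fr_nonneg[of P z] by simp

lemma rc_const: "rc P (\<lambda>z. c)"
  unfolding rc_def by simp

lemma Phi_bounds:
  assumes P: "meas_partition M P"
  shows "0 \<le> Phi M f P" "Phi M f P \<le> 4 * (\<integral>z. f z \<partial>N)"
proof -
  have rF: "rc P (Fr M P f)" by (rule rc_Fr[OF P])
  have i1: "integrable N (\<lambda>z. psi (Fr M P f z))" by (rule rc_integrable[OF P rc_comp[OF rF]])
  have i2: "integrable N (\<lambda>z. 4 * Fr M P f z)" by (rule rc_integrable[OF P rc_comp[OF rF]])
  show "0 \<le> Phi M f P" unfolding Phi_def using Fr_nonneg by (intro Bochner_Integration.integral_nonneg psi_nonneg) auto
  have "Phi M f P \<le> (\<integral>z. 4 * Fr M P f z \<partial>N)" unfolding Phi_def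
    using i1 i2 Fr_nonneg psi_le by (intro Bochner_Integration.integral_mono) auto
  also have "\<dots> = 4 * (\<integral>z. 1 * Fr M P f z \<partial>N)" by simp
  also have "(\<integral>z. 1 * Fr M P f z \<partial>N) = (\<integral>z. 1 * f z \<partial>N)" by (rule CE[OF P rc_const])
  finally show "Phi M f P \<le> 4 * (\<integral>z. f z \<partial>N)" by simp
qed

end



lemma rc_comp2: assumes "rc P a" "rc P b" shows "rc P (\<lambda>z. h (a z) (b z))"
  unfolding rc_def
proof (intro ballI)
  fix A B z w assume "A \<in> P" "B \<in> P" "z \<in> A \<times> B" "w \<in> A \<times> B"
  then have "a z = a w" "b z = b w" using rcD[OF assms(1)] rcD[OF assms(2)] by metis+
  then show "h (a z) (b z) = h (a w) (b w)" by simp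
qed

context reg
begin

definition viol :: "'a set set \<Rightarrow> 'a set \<Rightarrow> 'a set \<Rightarrow> real" where
  "viol P S T = (\<integral>z. trunc_err M P f z * indicator S (fst z) * indicator T (snd z) \<partial>N)"

definition u :: "'a set set \<Rightarrow> 'a \<times> 'a \<Rightarrow> real" where
  "u P z = (if Fr M P f z \<le> 1 then 1 else 0)"

lemma rc_u: "meas_partition M P \<Longrightarrow> rc P (u P)"
  unfolding u_def by (rule rc_comp[OF rc_Fr])

lemma viol_eq:
  assumes P: "meas_partition M P" and S: "S \<in> sets M" and T: "T \<in> sets M"
  shows "viol P S T = (\<integral>z. u P z * (f z * indicator (S \<times> T) z) \<partial>N) - (\<integral>z. u P z * (Fr M P f z * indicator (S \<times> T) z) \<partial>N)"
proof -
  have ST: "S \<times> T \<in> sets N" using S T by simp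
  have i1: "integrable N (\<lambda>z. u P z * (f z * indicator (S \<times> T) z))"
    by (rule rc_mult_integrable[OF P rc_u[OF P] integrable_real_mult_indicator[OF ST fint]])
  have i2: "integrable N (\<lambda>z. u P z * (Fr M P f z * indicator (S \<times> T) z))"
    by (rule rc_mult_integrable[OF P rc_u[OF P] integrable_real_mult_indicator[OF ST rc_integrable[OF P rc_Fr[OF P]]]])
  have "viol P S T = (\<integral>z. u P z * (f z * indicator (S \<times> T) z) - u P z * (Fr M P f z * indicator (S \<times> T) z) \<partial>N)"
    unfolding viol_def
    by (intro Bochner_Integration.integral_cong refl) (simp add: trunc_eq u_def indicator_times algebra_simps)
  also have "\<dots> = (\<integral>z. u P z * (f z * indicator (S \<times> T) z) \<partial>N) - (\<integral>z. u P z * (Fr M P f z * indicator (S \<times> T) z) \<partial>N)"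
    by (rule Bochner_Integration.integral_diff[OF i1 i2])
  finally show ?thesis .
qed

lemma viol_le1:
  assumes P: "meas_partition M P" and S: "S \<in> sets M" and T: "T \<in> sets M"
  shows "\<bar>viol P S T\<bar> \<le> 1"
proof -
  have ST: "S \<times> T \<in> sets N" using S T by simp
  have FI: "integrable N (Fr M P f)" by (rule rc_integrable[OF P rc_Fr[OF P]])
  have i1: "integrable N (\<lambda>z. u P z * (f z * indicator (S \<times> T) z))"
    by (rule rc_mult_integrable[OF P rc_u[OF P] integrable_real_mult_indicator[OF ST fint]])
  have i2: "integrable N (\<lambda>z. u P z * (Fr M P f z * indicator (S \<times> T) z))"
    by (rule rc_mult_integrable[OF P rc_u[OF P] integrable_real_mult_indicator[OF ST FI]])
  have i3: "integrable N (\<lambda>z. u P z * f z)" by (rule rc_mult_integrable[OF P rc_u[OF P] fint])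
  have i4: "integrable N (\<lambda>z. u P z * Fr M P f z)" by (rule rc_mult_integrable[OF P rc_u[OF P] FI])
  have un: "0 \<le> u P z" for z by (simp add: u_def)
  have a0: "0 \<le> (\<integral>z. u P z * (f z * indicator (S \<times> T) z) \<partial>N)"
    using fnn un by (intro Bochner_Integration.integral_nonneg) (auto simp: indicator_def)
  have b0: "0 \<le> (\<integral>z. u P z * (Fr M P f z * indicator (S \<times> T) z) \<partial>N)"
    using Fr_nonneg un by (intro Bochner_Integration.integral_nonneg) (auto simp: indicator_def)
  have a1: "(\<integral>z. u P z * (f z * indicator (S \<times> T) z) \<partial>N) \<le> (\<integral>z. u P z * f z \<partial>N)"
    using i1 i3 fnn un by (intro Bochner_Integration.integral_mono) (auto simp: indicator_def)
  have b1: "(\<integral>z. u P z * (Fr M P f z * indicator (S \<times> T) z) \<partial>N) \<le> (\<integral>z. u P z * Fr M P f z \<partial>N)"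
    using i2 i4 Fr_nonneg un by (intro Bochner_Integration.integral_mono) (auto simp: indicator_def)
  have c: "(\<integral>z. u P z * f z \<partial>N) = (\<integral>z. u P z * Fr M P f z \<partial>N)"
    by (rule CE[OF P rc_u[OF P], symmetric])
  have d: "(\<integral>z. u P z * Fr M P f z \<partial>N) \<le> (\<integral>z. 1 \<partial>N)"
    using i4 by (intro Bochner_Integration.integral_mono) (auto simp: u_def)
  have e: "(\<integral>z. 1 \<partial>N) = (1::real)" using N.prob_space by simp
  show ?thesis unfolding viol_eq[OF P S T] using a0 b0 a1 b1 c d e by linarith
qed

lemma energy:
  assumes P: "meas_partition M P" and Q: "meas_partition M Q" and QP: "refines Q P"
    and S: "S \<in> sets M" and T: "T \<in> sets M" and rST: "rc Q (indicator (S \<times> T))"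
    and e0: "0 < e" and e1: "e \<le> 1" and V: "e < \<bar>viol P S T\<bar>"
  shows "Phi M f P + 3 / 4 * e\<^sup>2 \<le> Phi M f Q"
proof -
  define x where "x = Fr M P f"
  define y where "y = Fr M Q f"
  define g where "g = (\<lambda>z. u P z * indicator (S \<times> T) z)"
  have rxP: "rc P x" unfolding x_def by (rule rc_Fr[OF P])
  have rx: "rc Q x" by (rule rc_refines[OF QP rxP])
  have ry: "rc Q y" unfolding y_def by (rule rc_Fr[OF Q])
  have ru: "rc Q (u P)" by (rule rc_refines[OF QP rc_u[OF P]])
  have rg: "rc Q g" unfolding g_def by (rule rc_mult[OF ru rST])
  have rdP: "rc P (\<lambda>z. dpsi (x z))" by (rule rc_comp[OF rxP])
  have rd: "rc Q (\<lambda>z. dpsi (x z))" by (rule rc_refines[OF QP rdP])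
  define V where "V = viol P S T"
  have gf: "(\<integral>z. u P z * (f z * indicator (S \<times> T) z) \<partial>N) = (\<integral>z. g z * f z \<partial>N)"
    unfolding g_def by (intro Bochner_Integration.integral_cong refl) (simp add: mult_ac)
  have gx: "(\<integral>z. u P z * (Fr M P f z * indicator (S \<times> T) z) \<partial>N) = (\<integral>z. g z * x z \<partial>N)"
    unfolding g_def x_def by (intro Bochner_Integration.integral_cong refl) (simp add: mult_ac)
  have gy: "(\<integral>z. g z * y z \<partial>N) = (\<integral>z. g z * f z \<partial>N)"
    unfolding y_def by (rule CE[OF Q rg])
  have VV: "V = (\<integral>z. g z * y z \<partial>N) - (\<integral>z. g z * x z \<partial>N)"
    unfolding V_def viol_eq[OF P S T] gf gx gy ..
  define sg where "sg = (if V \<ge> 0 then 1 else (-1::real))"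
  have sgV: "sg * V = \<bar>V\<bar>" unfolding sg_def by auto
  have ptw: "psi (y z) - psi (x z) - dpsi (x z) * (y z - x z) \<ge> e * (sg * g z) * (y z - x z) - e\<^sup>2 / 4" for z
  proof (rule D_bound)
    show "0 \<le> x z" "0 \<le> y z" unfolding x_def y_def by (rule Fr_nonneg)+
    show "0 < e" "e \<le> 1" by (rule e0, rule e1)
    show "\<bar>sg * g z\<bar> \<le> 1" unfolding sg_def g_def u_def by (auto simp: indicator_def)
    show "x z \<le> 1 \<or> sg * g z = 0" unfolding g_def u_def x_def by auto
  qed
  have iL: "integrable N (\<lambda>z. psi (y z) - psi (x z) - dpsi (x z) * (y z - x z))"
    by (rule rc_integrable[OF Q rc_comp2[OF ry rx]])
  have iR: "integrable N (\<lambda>z. e * (sg * g z) * (y z - x z) - e\<^sup>2 / 4)"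
    by (rule rc_integrable[OF Q rc_comp2[OF rg rc_comp2[OF ry rx]]])
  have "(\<integral>z. e * (sg * g z) * (y z - x z) - e\<^sup>2 / 4 \<partial>N) \<le> (\<integral>z. psi (y z) - psi (x z) - dpsi (x z) * (y z - x z) \<partial>N)"
    using iL iR ptw by (intro Bochner_Integration.integral_mono) auto
  moreover have "(\<integral>z. e * (sg * g z) * (y z - x z) - e\<^sup>2 / 4 \<partial>N) = e * \<bar>V\<bar> - e\<^sup>2 / 4"
  proof -
    have igy: "integrable N (\<lambda>z. e * sg * (g z * y z))" by (rule rc_integrable[OF Q rc_comp2[OF rg ry]])
    have igx: "integrable N (\<lambda>z. e * sg * (g z * x z))" by (rule rc_integrable[OF Q rc_comp2[OF rg rx]])
    have "(\<integral>z. e * (sg * g z) * (y z - x z) - e\<^sup>2 / 4 \<partial>N) = (\<integral>z. e * sg * (g z * y z) - e * sg * (g z * x z) - e\<^sup>2 / 4 \<partial>N)"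
      by (intro Bochner_Integration.integral_cong refl) (simp add: algebra_simps)
    also have "\<dots> = (\<integral>z. e * sg * (g z * y z) \<partial>N) - (\<integral>z. e * sg * (g z * x z) \<partial>N) - e\<^sup>2 / 4"
      using igy igx N.prob_space by simp
    also have "\<dots> = e * (sg * V) - e\<^sup>2 / 4"
      unfolding VV by (simp add: algebra_simps)
    finally show ?thesis using sgV by simp
  qed
  moreover have "(\<integral>z. psi (y z) - psi (x z) - dpsi (x z) * (y z - x z) \<partial>N) = Phi M f Q - Phi M f P"
  proof -
    have i1: "integrable N (\<lambda>z. psi (y z))" by (rule rc_integrable[OF Q rc_comp[OF ry]])
    have i2: "integrable N (\<lambda>z. psi (x z))" by (rule rc_integrable[OF Q rc_comp[OF rx]])
    have i3: "integrable N (\<lambda>z. dpsi (x z) * y z)" by (rule rc_integrable[OF Q rc_comp2[OF rx ry]])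
    have i4: "integrable N (\<lambda>z. dpsi (x z) * x z)" by (rule rc_integrable[OF Q rc_comp2[OF rx rx]])
    have "(\<integral>z. psi (y z) - psi (x z) - dpsi (x z) * (y z - x z) \<partial>N) = (\<integral>z. psi (y z) - psi (x z) - (dpsi (x z) * y z - dpsi (x z) * x z) \<partial>N)"
      by (intro Bochner_Integration.integral_cong refl) (simp add: algebra_simps)
    also have "\<dots> = (\<integral>z. psi (y z) \<partial>N) - (\<integral>z. psi (x z) \<partial>N) - ((\<integral>z. dpsi (x z) * y z \<partial>N) - (\<integral>z. dpsi (x z) * x z \<partial>N))"
      using i1 i2 i3 i4 by simp
    also have "(\<integral>z. dpsi (x z) * y z \<partial>N) = (\<integral>z. dpsi (x z) * f z \<partial>N)"
      unfolding y_def by (rule CE[OF Q rd])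
    also have "(\<integral>z. dpsi (x z) * x z \<partial>N) = (\<integral>z. dpsi (x z) * f z \<partial>N)"
      unfolding x_def by (rule CE[OF P rdP[unfolded x_def]])
    finally show ?thesis unfolding Phi_def x_def y_def by simp
  qed
  moreover have "e * e < e * \<bar>V\<bar>" using V e0 unfolding V_def by simp
  ultimately show ?thesis by (simp add: power2_eq_square)
qed

end



context reg
begin

lemma not_good:
  assumes "\<not> cut_norm M (trunc_err M P f) \<le> e"
  shows "\<exists>S\<in>sets M. \<exists>T\<in>sets M. e < \<bar>viol P S T\<bar>"
proof (rule ccontr)
  assume "\<not> ?thesis"
  then have h: "\<bar>viol P S T\<bar> \<le> e" if "S \<in> sets M" "T \<in> sets M" for S T using that by force
  have "cut_norm M (trunc_err M P f) \<le> e"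
    unfolding cut_norm_def
  proof (rule cSUP_least)
    show "sets M \<times> sets M \<noteq> {}" by blast
    fix AB assume "AB \<in> sets M \<times> sets M"
    then show "\<bar>\<integral>z. trunc_err M P f z * indicator (fst AB) (fst z) * indicator (snd AB) (snd z) \<partial>N\<bar> \<le> e"
      using h[of "fst AB" "snd AB"] unfolding viol_def by auto
  qed
  then show False using assms by simp
qed

lemma step:
  assumes P: "meas_partition M P" and S: "S \<in> sets M" and T: "T \<in> sets M"
    and e0: "0 < e" and V: "e < \<bar>viol P S T\<bar>"
  shows "\<exists>Q. meas_partition M Q \<and> card Q \<le> 4 * card P \<and> Phi M f P + 3 / 4 * e\<^sup>2 \<le> Phi M f Q"
proof -
  have e1: "e \<le> 1" using viol_le1[OF P S T] V by simp
  define Q1 where "Q1 = refine1 P S"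
  define Q where "Q = refine1 Q1 T"
  have Q1p: "meas_partition M Q1" unfolding Q1_def by (rule refine1_part[OF P S])
  have Qp: "meas_partition M Q" unfolding Q_def by (rule refine1_part[OF Q1p T])
  have fP: "finite P" and fQ1: "finite Q1" using P Q1p unfolding meas_partition_def by auto
  have "card Q \<le> 2 * card Q1" unfolding Q_def by (rule refine1_card[OF fQ1])
  moreover have "card Q1 \<le> 2 * card P" unfolding Q1_def by (rule refine1_card[OF fP])
  ultimately have cQ: "card Q \<le> 4 * card P" by simp
  have r1: "refines Q Q1" unfolding Q_def by (rule refine1_refines)
  have r2: "refines Q1 P" unfolding Q1_def by (rule refine1_refines)
  have QP: "refines Q P" by (rule refines_trans[OF r1 r2])
  have sS: "\<forall>A\<in>Q. A \<subseteq> S \<or> A \<inter> S = {}"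
    by (rule refines_split[OF r1]) (auto simp: Q1_def dest: refine1_split)
  have sT: "\<forall>A\<in>Q. A \<subseteq> T \<or> A \<inter> T = {}"
    unfolding Q_def by (auto dest: refine1_split)
  have "Phi M f P + 3 / 4 * e\<^sup>2 \<le> Phi M f Q"
    by (rule energy[OF P Qp QP S T rc_rect[OF sS sT] e0 e1 V])
  then show ?thesis using Qp cQ by blast
qed

lemma iter:
  assumes e0: "0 < e"
  shows "\<exists>P j. meas_partition M P \<and> real (card P) \<le> 4 ^ j \<and> real j * (3 / 4 * e\<^sup>2) \<le> Phi M f P
           \<and> (cut_norm M (trunc_err M P f) \<le> e \<or> k \<le> j)"
proof (induction k)
  case 0
  have p: "meas_partition M {space M}"
    unfolding meas_partition_def using not_empty by auto
  show ?case
    by (rule exI[of _ "{space M}"], rule exI[of _ 0]) (simp add: p Phi_bounds(1)[OF p])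
next
  case (Suc k)
  then obtain P j where P: "meas_partition M P" and c: "real (card P) \<le> 4 ^ j"
    and ph: "real j * (3 / 4 * e\<^sup>2) \<le> Phi M f P" and d: "cut_norm M (trunc_err M P f) \<le> e \<or> k \<le> j"
    by blast
  show ?case
  proof (cases "cut_norm M (trunc_err M P f) \<le> e \<or> Suc k \<le> j")
    case True
    then show ?thesis using P c ph by blast
  next
    case False
    then have kj: "k = j" using d by auto
    obtain S T where S: "S \<in> sets M" and T: "T \<in> sets M" and V: "e < \<bar>viol P S T\<bar>"
      using not_good False by blast
    obtain Q where Q: "meas_partition M Q" and cQ: "card Q \<le> 4 * card P"
      and pQ: "Phi M f P + 3 / 4 * e\<^sup>2 \<le> Phi M f Q"
      using step[OF P S T e0 V] by blast
    have "real (card Q) \<le> 4 * real (card P)" using cQ by linarith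
    also have "\<dots> \<le> 4 * 4 ^ j" using c by simp
    finally have c2: "real (card Q) \<le> 4 ^ Suc j" by simp
    have p2: "real (Suc j) * (3 / 4 * e\<^sup>2) \<le> Phi M f Q" using ph pQ by (simp add: algebra_simps)
    show ?thesis using Q c2 p2 kj by blast
  qed
qed

end



theorem theorem2p2:
  fixes M :: "'a measure" and f :: "'a \<times> 'a \<Rightarrow> real" and \<epsilon> :: real
  assumes "\<epsilon> > 0"
    and "prob_space M"
    and "f \<in> borel_measurable (M \<Otimes>\<^sub>M M)"
    and "\<forall>x\<in>space M. \<forall>y\<in>space M. f (x, y) \<ge> 0"
    and "\<forall>x\<in>space M. \<forall>y\<in>space M. f (x, y) = f (y, x)"
  shows "\<exists>P. meas_partition M P
    \<and> (expect2 M f \<noteq> \<infinity> \<longrightarrow> real (card P) \<le> 2 powr (32 * enn2real (expect2 M f) / \<epsilon>\<^sup>2))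
    \<and> cut_norm M (trunc_err M P f) \<le> \<epsilon>"
proof -
  have fnn: "\<And>z. z \<in> space (M \<Otimes>\<^sub>M M) \<Longrightarrow> 0 \<le> f z"
    using assms(4) by (auto simp: space_pair_measure)
  show ?thesis
  proof (cases "expect2 M f = \<infinity>")
    case False
    have fI: "integrable (M \<Otimes>\<^sub>M M) f"
      using assms(3) fnn False unfolding expect2_def
      by (intro integrableI_nonneg) (auto simp: less_top)
    interpret R: reg M f
      by (intro reg.intro reg_axioms.intro assms(2) fI fnn)
    define E where "E = enn2real (expect2 M f)"
    have EI: "E = (\<integral>z. f z \<partial>(M \<Otimes>\<^sub>M M))"
      unfolding E_def expect2_def using assms(3) fnn
      by (intro integral_eq_nn_integral[symmetric]) auto
    define d where "d = 3 / 4 * \<epsilon>\<^sup>2"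
    have d0: "d > 0" unfolding d_def using assms(1) by simp
    define k where "k = nat \<lfloor>4 * E / d\<rfloor> + 1"
    obtain P j where P: "meas_partition M P" and c: "real (card P) \<le> 4 ^ j"
      and ph: "real j * d \<le> Phi M f P" and g: "cut_norm M (trunc_err M P f) \<le> \<epsilon> \<or> k \<le> j"
      using R.iter[OF assms(1), of k] unfolding d_def by blast
    have "real j * d \<le> 4 * E" using ph R.Phi_bounds(2)[OF P] EI by simp
    then have jle: "real j \<le> 4 * E / d" using d0 by (simp add: field_simps)
    then have "j < k" unfolding k_def by linarith
    then have good: "cut_norm M (trunc_err M P f) \<le> \<epsilon>" using g by simp
    have E0: "0 \<le> E" unfolding E_def by simp
    have "real (card P) \<le> 4 ^ j" by (rule c)
    also have "(4::real) ^ j = 2 powr (2 * real j)"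
    proof -
      have "(4::real) ^ j = (2 ^ 2) ^ j" by simp
      also have "\<dots> = 2 ^ (2 * j)" by (simp add: power_mult)
      also have "\<dots> = 2 powr (real (2 * j))" by (rule powr_realpow[symmetric]) simp
      finally show ?thesis by simp
    qed
    also have "\<dots> \<le> 2 powr (32 * E / \<epsilon>\<^sup>2)"
    proof (rule powr_mono)
      have "8 * E / d = 2 * (4 * E / d)" by simp
      then have "2 * real j \<le> 8 * E / d" using jle by linarith
      also have "8 * E / d = (32 / 3) * (E / \<epsilon>\<^sup>2)" unfolding d_def using assms(1) by (simp add: field_simps)
      also have "\<dots> \<le> 32 * (E / \<epsilon>\<^sup>2)" using E0 by (intro mult_right_mono) auto
      finally show "2 * real j \<le> 32 * E / \<epsilon>\<^sup>2" by simp
    qed simp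
    finally show ?thesis using P good unfolding E_def by blast
  next
    case True
    have p: "meas_partition M {space M}"
      unfolding meas_partition_def using prob_space.not_empty[OF assms(2)] by auto
    have sp: "part_of {space M} x = space M" if "x \<in> space M" for x
      using part_of_eq[OF p _ that] by simp
    have e1: "emeasure M (space M) = 1" using prob_space.emeasure_space_1[OF assms(2)] .
    have z0: "trunc_err M {space M} f z = 0" if z: "z \<in> space (M \<Otimes>\<^sub>M M)" for z
    proof -
      have zz: "fst z \<in> space M" "snd z \<in> space M" using z by (auto simp: space_pair_measure)
      have "(\<integral>\<^sup>+ w. ennreal (f w) * indicator (space M \<times> space M) w \<partial>(M \<Otimes>\<^sub>M M)) = expect2 M f"
        unfolding expect2_def by (intro nn_integral_cong) (auto simp: space_pair_measure)
      then have "step_fun M {space M} f z = \<infinity>"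
        unfolding step_fun_def Let_def sp[OF zz(1)] sp[OF zz(2)] e1 using True by (simp add: ennreal_top_divide)
      then show ?thesis unfolding trunc_err_def by (simp add: top_unique)
    qed
    have "cut_norm M (trunc_err M {space M} f) \<le> \<epsilon>"
      unfolding cut_norm_def
    proof (rule cSUP_least)
      show "sets M \<times> sets M \<noteq> {}" by blast
      fix AB :: "'a set \<times> 'a set"
      have "(\<integral>z. trunc_err M {space M} f z * indicator (fst AB) (fst z) * indicator (snd AB) (snd z) \<partial>(M \<Otimes>\<^sub>M M))
          = (\<integral>z. 0 \<partial>(M \<Otimes>\<^sub>M M))"
        by (intro Bochner_Integration.integral_cong refl) (simp add: z0)
      then show "\<bar>\<integral>z. trunc_err M {space M} f z * indicator (fst AB) (fst z) * indicator (snd AB) (snd z) \<partial>(M \<Otimes>\<^sub>M M)\<bar> \<le> \<epsilon>"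
        using assms(1) by simp
    qed
    then show ?thesis using p True by blast
  qed
qed

end
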